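(* If $G$ is a finite non-commutative group equipped with any stable order, then $N^1(G)=\Omega(n)$.
   Context: A stable order on a monoid $M$ is a partial order with $x\le y\Rightarrow zx\le zy$ and $xz\le yz$ for all $z\in M$. Non-deterministic communication complexity: for $f:X\times Y\to\{0,1\}$, $N^1(f)$ is the minimum cost of a non-deterministic protocol for $f$; equivalently, up to an additive constant 2, $N^1(f)=\log_2 C^1(f)$, where $C^1(f)$ is the minimum number of rectangles $S\times T$ on which $f\equiv1$ whose union is $f^{-1}(1)$. An order ideal is a subset $I\subseteq M$ with $y\in I, x\le y\Rightarrow x\in I$. For an order ideal $I$, $N^1(M,I)(n)$ is $N^1$ of the function where Alice receives $m_1,m_3,\dots,m_{2n-1}\in M$, Bob receives $m_2,\dots,m_{2n}\in M$, with value $1$ iff $m_1\cdots m_{2n}\in I$; $N^1(M)(n)=\max_I N^1(M,I)(n)$. Asymptotics are as $n\to\infty$. *)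

theory Defs
  imports "HOL-Algebra.Group" "HOL-Library.Landau_Symbols" Complex_Main
begin

definition stable_order :: "('a, 'b) monoid_scheme \<Rightarrow> ('a \<Rightarrow> 'a \<Rightarrow> bool) \<Rightarrow> bool" where
  "stable_order M lq \<longleftrightarrow>
     (\<forall>x\<in>carrier M. lq x x) \<and>
     (\<forall>x\<in>carrier M. \<forall>y\<in>carrier M. lq x y \<and> lq y x \<longrightarrow> x = y) \<and>
     (\<forall>x\<in>carrier M. \<forall>y\<in>carrier M. \<forall>z\<in>carrier M. lq x y \<and> lq y z \<longrightarrow> lq x z) \<and>
     (\<forall>x\<in>carrier M. \<forall>y\<in>carrier M. \<forall>z\<in>carrier M. lq x y \<longrightarrow>
         lq (z \<otimes>\<^bsub>M\<^esub> x) (z \<otimes>\<^bsub>M\<^esub> y) \<and> lq (x \<otimes>\<^bsub>M\<^esub> z) (y \<otimes>\<^bsub>M\<^esub> z))"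

definition order_ideal :: "('a, 'b) monoid_scheme \<Rightarrow> ('a \<Rightarrow> 'a \<Rightarrow> bool) \<Rightarrow> 'a set \<Rightarrow> bool" where
  "order_ideal M lq I \<longleftrightarrow> I \<subseteq> carrier M \<and>
     (\<forall>y\<in>I. \<forall>x\<in>carrier M. lq x y \<longrightarrow> x \<in> I)"

definition one_rect :: "'x set \<Rightarrow> 'y set \<Rightarrow> ('x \<Rightarrow> 'y \<Rightarrow> bool) \<Rightarrow> 'x set \<times> 'y set \<Rightarrow> bool" where
  "one_rect X Y f R \<longleftrightarrow> fst R \<subseteq> X \<and> snd R \<subseteq> Y \<and> (\<forall>x\<in>fst R. \<forall>y\<in>snd R. f x y)"

definition C1 :: "'x set \<Rightarrow> 'y set \<Rightarrow> ('x \<Rightarrow> 'y \<Rightarrow> bool) \<Rightarrow> nat" where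
  "C1 X Y f = (LEAST k. \<exists>Rs. finite Rs \<and> card Rs = k \<and> (\<forall>R\<in>Rs. one_rect X Y f R) \<and>
      (\<Union>R\<in>Rs. fst R \<times> snd R) = {(x, y). x \<in> X \<and> y \<in> Y \<and> f x y})"

text \<open>Non-deterministic complexity, taken as log_2 C^1(f) (the additive constant
is irrelevant for the asymptotic statement; max with 1 avoids log 0).\<close>
definition N1 :: "'x set \<Rightarrow> 'y set \<Rightarrow> ('x \<Rightarrow> 'y \<Rightarrow> bool) \<Rightarrow> real" where
  "N1 X Y f = log 2 (real (max 1 (C1 X Y f)))"

text \<open>Product m_1 m_2 ... m_{2n} where Alice holds xs = [m_1, m_3, ...] and
Bob holds ys = [m_2, m_4, ...].\<close>
definition interleaved_prod :: "('a, 'b) monoid_scheme \<Rightarrow> 'a list \<Rightarrow> 'a list \<Rightarrow> 'a" where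
  "interleaved_prod M xs ys =
     foldr (\<lambda>(a, b) acc. a \<otimes>\<^bsub>M\<^esub> b \<otimes>\<^bsub>M\<^esub> acc) (zip xs ys) \<one>\<^bsub>M\<^esub>"

definition inputs :: "('a, 'b) monoid_scheme \<Rightarrow> nat \<Rightarrow> 'a list set" where
  "inputs M n = {xs. length xs = n \<and> set xs \<subseteq> carrier M}"

definition N1_ideal :: "('a, 'b) monoid_scheme \<Rightarrow> 'a set \<Rightarrow> nat \<Rightarrow> real" where
  "N1_ideal M I n = N1 (inputs M n) (inputs M n) (\<lambda>xs ys. interleaved_prod M xs ys \<in> I)"

definition N1_monoid :: "('a, 'b) monoid_scheme \<Rightarrow> ('a \<Rightarrow> 'a \<Rightarrow> bool) \<Rightarrow> nat \<Rightarrow> real" where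
  "N1_monoid M lq n = Max {N1_ideal M I n | I. order_ideal M lq I}"

end

theory Submission
  imports Defs "HOL-Algebra.Multiplicative_Group"
begin


fun ipn :: "nat list \<Rightarrow> nat list \<Rightarrow> nat" where
  "ipn (x#xs) (y#ys) = x*y + ipn xs ys"
| "ipn _ _ = 0"

definition Vs :: "nat \<Rightarrow> nat \<Rightarrow> nat list set" where
  "Vs m k = {xs. set xs \<subseteq> {..<m} \<and> length xs = k}"

lemma Vs_finite: "finite (Vs m k)"
  unfolding Vs_def by (rule finite_lists_length_eq) simp

lemma Vs_card: "card (Vs m k) = m ^ k"
  unfolding Vs_def by (subst card_lists_length_eq) simp_all

lemma Vs_Suc: "Vs m (Suc k) = (\<lambda>(a,xs). a#xs) ` ({..<m} \<times> Vs m k)"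
  unfolding Vs_def by (auto simp: length_Suc_conv image_iff)

definition om :: "nat \<Rightarrow> complex" where "om m = cis (2 * pi / real m)"

lemma om_pow: "om m ^ k = cis (2 * pi * real k / real m)"
  unfolding om_def by (simp add: DeMoivre mult_ac)

lemma om_pow_m: "m > 0 \<Longrightarrow> om m ^ m = 1"
  unfolding om_pow by simp

lemma om_pow_eq1:
  assumes "m > 0" shows "om m ^ z = 1 \<longleftrightarrow> m dvd z"
proof -
  have "om m ^ z = om m ^ (z mod m) * (om m ^ m) ^ (z div m)"
    by (metis mod_mult_div_eq power_add power_mult mult.commute)
  also have "\<dots> = om m ^ (z mod m)" using om_pow_m[OF assms] by simp
  finally have e: "om m ^ z = cis (2 * pi * real (z mod m) / real m)" by (simp add: om_pow)
  have inj: "inj_on (\<lambda>k. cis (2 * pi * real k / real m)) {..<m}"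
    using bij_betw_roots_unity[OF assms] by (simp add: bij_betw_def)
  have "cis (2 * pi * real (z mod m) / real m) = 1 \<longleftrightarrow> z mod m = 0"
  proof
    assume "cis (2 * pi * real (z mod m) / real m) = 1"
    hence "cis (2 * pi * real (z mod m) / real m) = cis (2 * pi * real (0::nat) / real m)" by simp
    from inj_onD[OF inj this] assms show "z mod m = 0" by simp
  qed simp
  with e show ?thesis by auto
qed

lemma geo_sum:
  assumes "m > 0" shows "(\<Sum>a<m. om m ^ (a * z)) = (if m dvd z then of_nat m else 0)"
proof (cases "m dvd z")
  case True
  hence "om m ^ (a * z) = 1" for a using om_pow_eq1[OF assms] by simp
  thus ?thesis using True by simp
next
  case False
  let ?q = "om m ^ z"
  have q1: "?q \<noteq> 1" using False om_pow_eq1[OF assms] by simp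
  have "(\<Sum>a<m. om m ^ (a * z)) = (\<Sum>a<m. ?q ^ a)"
    by (intro sum.cong refl) (metis power_mult mult.commute)
  also have "\<dots> = (?q ^ m - 1) / (?q - 1)" by (rule geometric_sum[OF q1])
  also have "?q ^ m = 1" using om_pow_m[OF assms] by (metis power_mult mult.commute power_one)
  finally show ?thesis using False by simp
qed

lemma orth:
  assumes "m > 0"
  shows "length zs = k \<Longrightarrow> (\<Sum>x\<in>Vs m k. om m ^ ipn x zs) = (if \<forall>z\<in>set zs. m dvd z then of_nat (m ^ k) else 0)"
proof (induction k arbitrary: zs)
  case 0
  hence "zs = []" by simp
  moreover have "Vs m 0 = {[]}" unfolding Vs_def by auto
  ultimately show ?case by simp
next
  case (Suc k)
  then obtain z0 zs' where zs: "zs = z0 # zs'" and l: "length zs' = k" by (auto simp: length_Suc_conv)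
  have inj: "inj_on (\<lambda>(a,xs). a#xs) ({..<m} \<times> Vs m k)" by (auto simp: inj_on_def)
  have "(\<Sum>x\<in>Vs m (Suc k). om m ^ ipn x zs) = (\<Sum>p\<in>{..<m} \<times> Vs m k. om m ^ ipn (fst p # snd p) zs)"
    unfolding Vs_Suc by (subst sum.reindex[OF inj]) (simp add: case_prod_beta)
  also have "\<dots> = (\<Sum>p\<in>{..<m} \<times> Vs m k. om m ^ (fst p * z0) * om m ^ ipn (snd p) zs')"
    by (simp add: zs power_add)
  also have "\<dots> = (\<Sum>a<m. om m ^ (a * z0)) * (\<Sum>x\<in>Vs m k. om m ^ ipn x zs')"
    by (simp add: sum_product sum.cartesian_product case_prod_beta)
  also have "\<dots> = (if m dvd z0 then of_nat m else 0) * (if \<forall>z\<in>set zs'. m dvd z then of_nat (m ^ k) else 0)"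
    using geo_sum[OF assms] Suc.IH[OF l] by simp
  finally show ?case by (simp add: zs)
qed

definition comb :: "nat \<Rightarrow> nat list \<Rightarrow> nat list \<Rightarrow> nat list" where
  "comb m y y' = map2 (\<lambda>a b. a + (m - 1) * b) y y'"

lemma ipn_comb: "length x = length y \<Longrightarrow> length y = length y' \<Longrightarrow>
   ipn x (comb m y y') = ipn x y + (m - 1) * ipn x y'"
proof (induction x y arbitrary: y' rule: ipn.induct)
  case (1 x xs y ys)
  then obtain b bs where "y' = b # bs" by (cases y') auto
  with 1 show ?case by (simp add: comb_def algebra_simps)
qed (auto simp: comb_def)

lemma length_comb: "length (comb m y y') = min (length y) (length y')"
  by (simp add: comb_def)

lemma dvd_comb1:
  assumes "a < (m::nat)" "b < m" shows "m dvd a + (m - 1) * b \<longleftrightarrow> a = b"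
proof
  assume d: "m dvd a + (m - 1) * b"
  obtain n where mn: "m = Suc n" using assms by (cases m) auto
  have "a + (m - 1) * b + b = a + m * b" unfolding mn by simp
  hence "(a + (m - 1) * b + b) mod m = (a + m * b) mod m" by (simp only:)
  also have "\<dots> = a mod m" by simp
  finally have "(a + (m - 1) * b + b) mod m = a mod m" .
  moreover have "(a + (m - 1) * b + b) mod m = b mod m" using d
    by (metis dvd_imp_mod_0 mod_add_left_eq add.left_neutral)
  ultimately show "a = b" using assms by simp
next
  assume "a = b"
  obtain n where mn: "m = Suc n" using assms by (cases m) auto
  have "a + (m - 1) * b = m * b" unfolding mn using \<open>a = b\<close> by simp
  thus "m dvd a + (m - 1) * b" by simp
qed

lemma dvd_comb:
  "y \<in> Vs m k \<Longrightarrow> y' \<in> Vs m k \<Longrightarrow> (\<forall>z\<in>set (comb m y y'). m dvd z) \<longleftrightarrow> y = y'"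
proof (induction k arbitrary: y y')
  case 0 thus ?case by (simp add: Vs_def comb_def)
next
  case (Suc k)
  from Suc.prems obtain a as' b bs where y: "y = a # as'" "y' = b # bs"
    unfolding Vs_def by (auto simp: length_Suc_conv)
  with Suc.prems have ab: "a < m" "b < m" and r: "as' \<in> Vs m k" "bs \<in> Vs m k"
    by (auto simp: Vs_def)
  show ?case using Suc.IH[OF r] dvd_comb1[OF ab] by (simp add: y comb_def)
qed

lemma rect_bound:
  assumes m: "m > 0" and S: "S \<subseteq> Vs m k" and T: "T \<subseteq> Vs m k"
    and orth0: "\<forall>x\<in>S. \<forall>y\<in>T. m dvd ipn x y"
  shows "card S * card T \<le> m ^ k"
proof -
  define F where "F x = (\<Sum>y\<in>T. om m ^ ipn x y)" for x
  have finT: "finite T" using T Vs_finite finite_subset by blast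
  have finS: "finite S" using S Vs_finite finite_subset by blast
  have cnjom: "cnj (om m) = om m ^ (m - 1)"
  proof -
    have "om m * om m ^ (m - 1) = 1" using om_pow_m[OF m]
      by (metis Suc_diff_1 m power_Suc)
    moreover have "om m * cnj (om m) = 1" unfolding om_def
      by (simp add: cis_cnj cis_mult)
    ultimately show ?thesis
      by (metis mult.left_commute mult_1_right)
  qed
  have key: "om m ^ ipn x y * cnj (om m) ^ ipn x y' = om m ^ ipn x (comb m y y')"
    if "x \<in> Vs m k" "y \<in> Vs m k" "y' \<in> Vs m k" for x y y'
  proof -
    have l: "length x = length y" "length y = length y'" using that by (auto simp: Vs_def)
    show ?thesis unfolding ipn_comb[OF l] cnjom
      by (simp add: power_add power_mult)
  qed
  have "(\<Sum>x\<in>Vs m k. F x * cnj (F x)) =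
        (\<Sum>x\<in>Vs m k. \<Sum>y\<in>T. \<Sum>y'\<in>T. om m ^ ipn x y * cnj (om m ^ ipn x y'))"
    unfolding F_def by (simp add: sum_product cnj_sum)
  also have "\<dots> = (\<Sum>x\<in>Vs m k. \<Sum>y\<in>T. \<Sum>y'\<in>T. om m ^ ipn x (comb m y y'))"
  proof (intro sum.cong refl)
    fix x y y' assume "x \<in> Vs m k" "y \<in> T" "y' \<in> T"
    thus "om m ^ ipn x y * cnj (om m ^ ipn x y') = om m ^ ipn x (comb m y y')"
      using key[of x y y'] S T by auto
  qed
  also have "\<dots> = (\<Sum>y\<in>T. \<Sum>y'\<in>T. \<Sum>x\<in>Vs m k. om m ^ ipn x (comb m y y'))"
  proof -
    have "(\<Sum>x\<in>Vs m k. \<Sum>y\<in>T. \<Sum>y'\<in>T. om m ^ ipn x (comb m y y')) =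
       (\<Sum>y\<in>T. \<Sum>x\<in>Vs m k. \<Sum>y'\<in>T. om m ^ ipn x (comb m y y'))" by (rule sum.swap)
    also have "\<dots> = (\<Sum>y\<in>T. \<Sum>y'\<in>T. \<Sum>x\<in>Vs m k. om m ^ ipn x (comb m y y'))"
      by (rule sum.cong[OF refl]) (rule sum.swap)
    finally show ?thesis .
  qed
  also have "\<dots> = (\<Sum>y\<in>T. \<Sum>y'\<in>T. if y = y' then of_nat (m ^ k) else 0)"
  proof (intro sum.cong refl)
    fix y y' assume "y \<in> T" "y' \<in> T"
    hence yy: "y \<in> Vs m k" "y' \<in> Vs m k" using T by auto
    hence "length (comb m y y') = k" by (simp add: length_comb Vs_def)
    from orth[OF m this] dvd_comb[OF yy]
    show "(\<Sum>x\<in>Vs m k. om m ^ ipn x (comb m y y')) = (if y = y' then of_nat (m ^ k) else 0)"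
      by simp
  qed
  also have "\<dots> = of_nat (card T * m ^ k)" using finT by simp
  finally have E: "(\<Sum>x\<in>Vs m k. F x * cnj (F x)) = of_nat (card T * m ^ k)" .
  have E2: "(\<Sum>x\<in>Vs m k. (cmod (F x))^2) = real (card T * m ^ k)"
  proof -
    have "complex_of_real (\<Sum>x\<in>Vs m k. (cmod (F x))^2) = (\<Sum>x\<in>Vs m k. F x * cnj (F x))"
      unfolding of_real_sum by (intro sum.cong refl) (rule complex_norm_square)
    with E show ?thesis by (metis of_real_eq_iff of_real_of_nat_eq)
  qed
  have FS: "F x = of_nat (card T)" if "x \<in> S" for x
  proof -
    have "om m ^ ipn x y = 1" if "y \<in> T" for y using orth0 \<open>x \<in> S\<close> that om_pow_eq1[OF m] by auto
    thus ?thesis unfolding F_def by simp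
  qed
  have "real (card S * card T * card T) = (\<Sum>x\<in>S. (cmod (F x))^2)"
    using FS by (simp add: power2_eq_square)
  also have "\<dots> \<le> (\<Sum>x\<in>Vs m k. (cmod (F x))^2)"
    by (rule sum_mono2[OF Vs_finite S]) auto
  finally have "card S * card T * card T \<le> card T * m ^ k" using E2 by linarith
  hence "card S * card T * card T \<le> m ^ k * card T" by (simp add: mult.commute)
  thus ?thesis by (cases "card T = 0") auto
qed

lemma count_bound:
  assumes m: "m > 1"
  shows "m ^ (2 * k) \<le> card {p \<in> Vs m (Suc k) \<times> Vs m (Suc k). m dvd ipn (fst p) (snd p)}"
proof -
  define h where "h u v = (1 # u, ((m - ipn u v mod m) mod m) # v)" for u v
  have inj: "inj_on (\<lambda>p. h (fst p) (snd p)) (Vs m k \<times> Vs m k)"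
    by (auto simp: inj_on_def h_def)
  have sub: "(\<lambda>p. h (fst p) (snd p)) ` (Vs m k \<times> Vs m k) \<subseteq> {p \<in> Vs m (Suc k) \<times> Vs m (Suc k). m dvd ipn (fst p) (snd p)}"
  proof (rule image_subsetI)
    fix p assume "p \<in> Vs m k \<times> Vs m k"
    then obtain u v where p: "p = (u, v)" and uv: "u \<in> Vs m k" "v \<in> Vs m k" by auto
    have "m dvd (m - ipn u v mod m) mod m + ipn u v"
    proof (cases "ipn u v mod m = 0")
      case True thus ?thesis by (simp add: dvd_eq_mod_eq_0)
    next
      case False
      define r where "r = ipn u v mod m"
      have r0: "r > 0" "r < m" using False m by (auto simp: r_def)
      hence e1: "(m - r) mod m = m - r" by simp
      have e2: "ipn u v = m * (ipn u v div m) + r" by (simp add: r_def)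
      have "(m - r) + ipn u v = m * (ipn u v div m + 1)"
        using r0 by (subst e2) (simp add: algebra_simps)
      thus ?thesis using e1 by (simp add: r_def[symmetric])
    qed
    thus "h (fst p) (snd p) \<in> {p \<in> Vs m (Suc k) \<times> Vs m (Suc k). m dvd ipn (fst p) (snd p)}"
      using uv m by (auto simp: h_def Vs_def p)
  qed
  have fin: "finite {p \<in> Vs m (Suc k) \<times> Vs m (Suc k). m dvd ipn (fst p) (snd p)}"
    by (rule finite_subset[of _ "Vs m (Suc k) \<times> Vs m (Suc k)"]) (auto simp: Vs_finite)
  have "card (Vs m k \<times> Vs m k) \<le> card {p \<in> Vs m (Suc k) \<times> Vs m (Suc k). m dvd ipn (fst p) (snd p)}"
    by (rule card_inj_on_le[OF inj sub fin])
  thus ?thesis by (simp add: card_cartesian_product Vs_card mult_2 power_add)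
qed



definition blk :: "('a, 'b) monoid_scheme \<Rightarrow> 'a \<Rightarrow> bool \<Rightarrow> 'a list" where
  "blk G a u = (if u then [a, inv\<^bsub>G\<^esub> a] else [\<one>\<^bsub>G\<^esub>, \<one>\<^bsub>G\<^esub>])"

fun cnt :: "bool list \<Rightarrow> bool list \<Rightarrow> nat" where
  "cnt (u#us) (v#vs) = (if u \<and> v then 1 else 0) + cnt us vs"
| "cnt _ _ = 0"

definition rowA :: "nat \<Rightarrow> nat \<Rightarrow> bool list" where
  "rowA m x = concat (map (\<lambda>j. replicate m (j < x)) [0..<m])"
definition rowB :: "nat \<Rightarrow> nat \<Rightarrow> bool list" where
  "rowB m y = concat (map (\<lambda>j. map (\<lambda>l. l < y) [0..<m]) [0..<m])"
definition encA :: "nat \<Rightarrow> nat list \<Rightarrow> bool list" where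
  "encA m xs = concat (map (rowA m) xs)"
definition encB :: "nat \<Rightarrow> nat list \<Rightarrow> bool list" where
  "encB m ys = concat (map (rowB m) ys)"

lemma length_rowA: "length (rowA m x) = m * m"
  by (simp add: rowA_def length_concat sum_list_triv comp_def)
lemma length_rowB: "length (rowB m x) = m * m"
  by (simp add: rowB_def length_concat sum_list_triv comp_def)
lemma length_encA: "length (encA m xs) = m * m * length xs"
  by (simp add: encA_def length_concat length_rowA sum_list_triv comp_def)
lemma length_encB: "length (encB m xs) = m * m * length xs"
  by (simp add: encB_def length_concat length_rowB sum_list_triv comp_def)

lemma cnt_append: "length us1 = length vs1 \<Longrightarrow> cnt (us1 @ us2) (vs1 @ vs2) = cnt us1 vs1 + cnt us2 vs2"
  by (induction us1 vs1 rule: cnt.induct) auto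

lemma cnt_concat: "(\<forall>j\<in>set js. length (f j) = length (g j)) \<Longrightarrow>
    cnt (concat (map f js)) (concat (map g js)) = (\<Sum>j\<leftarrow>js. cnt (f j) (g j))"
  by (induction js) (auto simp: cnt_append)

lemma cnt_rep: "cnt (replicate (length L) b) L = (if b then length (filter (\<lambda>a. a) L) else 0)"
  by (induction L) auto

lemma filter_less_upt: "length (filter (\<lambda>l. l < y) [0..<m]) = min y m"
  by (induction m) auto

lemma cnt_row: "x \<le> m \<Longrightarrow> y \<le> m \<Longrightarrow> cnt (rowA m x) (rowB m y) = x * y"
proof -
  assume xy: "x \<le> m" "y \<le> m"
  have "cnt (rowA m x) (rowB m y) = (\<Sum>j\<leftarrow>[0..<m]. cnt (replicate m (j < x)) (map (\<lambda>l. l < y) [0..<m]))"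
    unfolding rowA_def rowB_def by (rule cnt_concat) simp
  also have "\<dots> = (\<Sum>j\<leftarrow>[0..<m]. if j < x then y else 0)"
  proof -
    have "cnt (replicate m (j < x)) (map (\<lambda>l. l < y) [0..<m]) = (if j < x then y else 0)" for j
      using cnt_rep[of "map (\<lambda>l. l < y) [0..<m]" "j < x"] filter_less_upt[of y m] xy
      by (simp add: comp_def)
    thus ?thesis by simp
  qed
  also have "\<dots> = (\<Sum>j<m. if j < x then y else 0)"
    by (simp add: sum_list_sum_nth atLeast0LessThan)
  also have "\<dots> = (\<Sum>j\<in>{..<x}. y)"
    using xy by (intro sum.mono_neutral_cong_right) auto
  finally show ?thesis by simp
qed

lemma cnt_enc: "length xs = length ys \<Longrightarrow> set xs \<subseteq> {..m} \<Longrightarrow> set ys \<subseteq> {..m} \<Longrightarrow>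
   cnt (encA m xs) (encB m ys) = ipn xs ys"
proof (induction xs ys rule: ipn.induct)
  case (1 x xs y ys)
  thus ?case by (simp add: encA_def encB_def cnt_append length_rowA length_rowB cnt_row)
qed (auto simp: encA_def encB_def)

context group begin

lemma ip_Nil [simp]: "interleaved_prod G [] ys = \<one>"
  by (simp add: interleaved_prod_def)

lemma ip_Cons [simp]: "interleaved_prod G (x#xs) (y#ys) = x \<otimes> y \<otimes> interleaved_prod G xs ys"
  by (simp add: interleaved_prod_def)

lemma ip_closed: "set xs \<subseteq> carrier G \<Longrightarrow> set ys \<subseteq> carrier G \<Longrightarrow> interleaved_prod G xs ys \<in> carrier G"
proof (induction xs arbitrary: ys)
  case (Cons x xs) thus ?case by (cases ys) (auto simp: interleaved_prod_def)
qed simp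

lemma ip_append: "length xs1 = length ys1 \<Longrightarrow> set xs1 \<subseteq> carrier G \<Longrightarrow> set ys1 \<subseteq> carrier G \<Longrightarrow>
   set xs2 \<subseteq> carrier G \<Longrightarrow> set ys2 \<subseteq> carrier G \<Longrightarrow>
   interleaved_prod G (xs1 @ xs2) (ys1 @ ys2) = interleaved_prod G xs1 ys1 \<otimes> interleaved_prod G xs2 ys2"
proof (induction xs1 arbitrary: ys1)
  case Nil thus ?case by (simp add: ip_closed)
next
  case (Cons x xs)
  then obtain y ys where ys1: "ys1 = y # ys" by (cases ys1) auto
  with Cons show ?case by (simp add: m_assoc ip_closed)
qed

lemma set_blk: "a \<in> carrier G \<Longrightarrow> set (blk G a u) \<subseteq> carrier G"
  by (simp add: blk_def)

lemma set_blks: "a \<in> carrier G \<Longrightarrow> set (concat (map (blk G a) us)) \<subseteq> carrier G"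
  using set_blk by auto

lemma length_blks: "length (concat (map (blk G a) us)) = 2 * length us"
  by (induction us) (auto simp: blk_def)

lemma ip_blk: "a \<in> carrier G \<Longrightarrow> b \<in> carrier G \<Longrightarrow>
   interleaved_prod G (blk G a u) (blk G b v) = (if u \<and> v then a \<otimes> b \<otimes> inv a \<otimes> inv b else \<one>)"
  by (simp add: blk_def m_assoc)

lemma ip_blks:
  assumes ab: "a \<in> carrier G" "b \<in> carrier G"
  shows "length us = length vs \<Longrightarrow> interleaved_prod G (concat (map (blk G a) us)) (concat (map (blk G b) vs))
     = (a \<otimes> b \<otimes> inv a \<otimes> inv b) [^] cnt us vs"
proof (induction us vs rule: cnt.induct)
  case (1 u us v vs)
  have "interleaved_prod G (concat (map (blk G a) (u#us))) (concat (map (blk G b) (v#vs)))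
    = interleaved_prod G (blk G a u) (blk G b v) \<otimes> interleaved_prod G (concat (map (blk G a) us)) (concat (map (blk G b) vs))"
    using ab by (simp only: list.map concat.simps, intro ip_append) (auto simp: blk_def set_blks)
  also have "\<dots> = (a \<otimes> b \<otimes> inv a \<otimes> inv b) [^] ((if u \<and> v then 1 else 0) + cnt us vs)"
    using 1 ab by (simp add: ip_blk nat_pow_mult[symmetric])
  finally show ?case by simp
qed auto

lemma ip_ones: "interleaved_prod G (replicate r \<one>) (replicate r \<one>) = \<one>"
  by (induction r) auto

end



lemma cover_lb:
  fixes X :: "'x set" and Y :: "'y set"
  assumes finX: "finite X" and finY: "finite Y" and m: "m > 0"
    and enA: "\<And>x. x \<in> Vs m k \<Longrightarrow> enA x \<in> X"
    and enB: "\<And>y. y \<in> Vs m k \<Longrightarrow> enB y \<in> Y"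
    and hf: "\<And>x y. x \<in> Vs m k \<Longrightarrow> y \<in> Vs m k \<Longrightarrow> f (enA x) (enB y) \<longleftrightarrow> m dvd ipn x y"
  shows "card {p \<in> Vs m k \<times> Vs m k. m dvd ipn (fst p) (snd p)} \<le> C1 X Y f * m ^ k"
proof -
  let ?P = "\<lambda>k. \<exists>Rs. finite Rs \<and> card Rs = k \<and> (\<forall>R\<in>Rs. one_rect X Y f R) \<and>
      (\<Union>R\<in>Rs. fst R \<times> snd R) = {(x, y). x \<in> X \<and> y \<in> Y \<and> f x y}"
  define Rs0 where "Rs0 = (\<lambda>p. ({fst p}, {snd p})) ` {(x, y). x \<in> X \<and> y \<in> Y \<and> f x y}"
  have "finite {(x, y). x \<in> X \<and> y \<in> Y \<and> f x y}"
    by (rule finite_subset[of _ "X \<times> Y"]) (auto simp: finX finY)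
  hence P0: "?P (card Rs0)"
    by (intro exI[of _ Rs0]) (auto simp: Rs0_def one_rect_def)
  have "?P (C1 X Y f)" unfolding C1_def by (rule LeastI[of ?P "card Rs0"]) (rule P0)
  then obtain Rs where Rs: "finite Rs" "card Rs = C1 X Y f" "\<forall>R\<in>Rs. one_rect X Y f R"
    "(\<Union>R\<in>Rs. fst R \<times> snd R) = {(x, y). x \<in> X \<and> y \<in> Y \<and> f x y}" by blast
  define pA where "pA R = {x \<in> Vs m k. enA x \<in> fst R}" for R :: "'x set \<times> 'y set"
  define pB where "pB R = {y \<in> Vs m k. enB y \<in> snd R}" for R :: "'x set \<times> 'y set"
  have sub: "{p \<in> Vs m k \<times> Vs m k. m dvd ipn (fst p) (snd p)} \<subseteq> (\<Union>R\<in>Rs. pA R \<times> pB R)"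
  proof (rule subsetI)
    fix p assume "p \<in> {p \<in> Vs m k \<times> Vs m k. m dvd ipn (fst p) (snd p)}"
    then obtain x y where p: "p = (x, y)" and xy: "x \<in> Vs m k" "y \<in> Vs m k" "m dvd ipn x y" by auto
    hence "(enA x, enB y) \<in> {(x, y). x \<in> X \<and> y \<in> Y \<and> f x y}" using hf enA enB by auto
    with Rs(4) obtain R where "R \<in> Rs" "enA x \<in> fst R" "enB y \<in> snd R" by blast
    thus "p \<in> (\<Union>R\<in>Rs. pA R \<times> pB R)" using xy by (auto simp: pA_def pB_def p)
  qed
  have finU: "finite (\<Union>R\<in>Rs. pA R \<times> pB R)"
    by (rule finite_subset[of _ "Vs m k \<times> Vs m k"]) (auto simp: pA_def pB_def Vs_finite)
  have "card {p \<in> Vs m k \<times> Vs m k. m dvd ipn (fst p) (snd p)} \<le> card (\<Union>R\<in>Rs. pA R \<times> pB R)"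
    by (rule card_mono[OF finU sub])
  also have "\<dots> \<le> (\<Sum>R\<in>Rs. card (pA R \<times> pB R))" by (rule card_UN_le[OF Rs(1)])
  also have "\<dots> \<le> (\<Sum>R\<in>Rs. m ^ k)"
  proof (rule sum_mono)
    fix R assume "R \<in> Rs"
    hence or: "one_rect X Y f R" using Rs(3) by blast
    have "\<forall>x\<in>pA R. \<forall>y\<in>pB R. m dvd ipn x y"
      using or hf unfolding pA_def pB_def one_rect_def by blast
    hence "card (pA R) * card (pB R) \<le> m ^ k"
      by (intro rect_bound[OF m]) (auto simp: pA_def pB_def)
    thus "card (pA R \<times> pB R) \<le> m ^ k" by (simp add: card_cartesian_product)
  qed
  also have "\<dots> = C1 X Y f * m ^ k" using Rs(2) by simp
  finally show ?thesis .
qed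

lemma inputs_finite: "finite (carrier M) \<Longrightarrow> finite (inputs M n)"
  unfolding inputs_def by (metis (no_types, lifting) Collect_cong finite_lists_length_eq)

context group begin

lemma stable_trivial:
  assumes fin: "finite (carrier G)" and st: "stable_order G lq"
    and x: "x \<in> carrier G" and le: "lq x \<one>"
  shows "x = \<one>"
proof -
  have refl: "\<And>x. x \<in> carrier G \<Longrightarrow> lq x x"
    and antis: "\<And>x y. x \<in> carrier G \<Longrightarrow> y \<in> carrier G \<Longrightarrow> lq x y \<Longrightarrow> lq y x \<Longrightarrow> x = y"
    and trans: "\<And>x y z. x \<in> carrier G \<Longrightarrow> y \<in> carrier G \<Longrightarrow> z \<in> carrier G \<Longrightarrow> lq x y \<Longrightarrow> lq y z \<Longrightarrow> lq x z"
    and mulL: "\<And>x y z. x \<in> carrier G \<Longrightarrow> y \<in> carrier G \<Longrightarrow> z \<in> carrier G \<Longrightarrow> lq x y \<Longrightarrow> lq (z \<otimes> x) (z \<otimes> y)"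
    and mulR: "\<And>x y z. x \<in> carrier G \<Longrightarrow> y \<in> carrier G \<Longrightarrow> z \<in> carrier G \<Longrightarrow> lq x y \<Longrightarrow> lq (x \<otimes> z) (y \<otimes> z)"
    using st unfolding stable_order_def by blast+
  define g where "g = inv x"
  have g: "g \<in> carrier G" using x by (simp add: g_def)
  have "lq (inv x \<otimes> x) (inv x \<otimes> \<one>)" by (rule mulL) (use x le in auto)
  hence g1: "lq \<one> g" using x by (simp add: g_def)
  have pw: "lq \<one> (g [^] n)" for n :: nat
  proof (induction n)
    case 0 show ?case using refl by simp
  next
    case (Suc n)
    have "lq (\<one> \<otimes> g) (g [^] n \<otimes> g)" by (rule mulR) (use Suc g in auto)
    hence "lq g (g [^] Suc n)" using g by simp
    thus ?case by (intro trans[OF _ _ _ g1]) (use g in auto)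
  qed
  have "ord g \<ge> 1" by (rule ord_ge_1[OF fin g])
  then obtain j where j: "ord g = Suc j" by (cases "ord g") auto
  have "lq (g \<otimes> \<one>) (g \<otimes> g [^] j)" by (rule mulL) (use pw[of j] g in auto)
  moreover have "g \<otimes> g [^] j = g [^] ord g" by (simp only: j nat_pow_Suc2[OF g])
  ultimately have "lq g \<one>" using g by (simp add: pow_ord_eq_1)
  hence "g = \<one>" using antis g1 g by auto
  thus ?thesis using x by (metis g_def inv_inv one_closed inv_one)
qed

end



lemma log_nonneg: "0 \<le> log 2 (real (max 1 (C::nat)))"
proof -
  have "1 \<le> real (max 1 C)" by simp
  thus ?thesis by (subst zero_le_log_cancel_iff) auto
qed

lemma log_bound:
  assumes m: "m \<ge> (2::nat)" and h: "m ^ (2 * k') \<le> C * m ^ Suc k'"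
  shows "real k' - 1 \<le> log 2 (real (max 1 C))"
proof (cases k')
  case 0
  have "0 \<le> log 2 (real (max 1 C))" by (rule log_nonneg)
  moreover have "real k' - 1 \<le> 0" using 0 by simp
  ultimately show ?thesis by linarith
next
  case (Suc j)
  have "m ^ (2 * k') = m ^ j * m ^ Suc k'" by (simp add: Suc power_add[symmetric] mult_2)
  with h have "m ^ j * m ^ Suc k' \<le> C * m ^ Suc k'" by simp
  hence "m ^ j \<le> C" using m by simp
  moreover have "2 ^ j \<le> m ^ j" using m by (simp add: power_mono)
  ultimately have "(2::nat) ^ j \<le> max 1 C" by simp
  hence "real ((2::nat) ^ j) \<le> real (max 1 C)" by (simp only: of_nat_le_iff)
  hence "log 2 (2 ^ j) \<le> log 2 (real (max 1 C))" by (subst log_le_cancel_iff) auto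
  thus ?thesis using Suc by simp
qed

context group begin

lemma comm_ne:
  assumes a: "a \<in> carrier G" and b: "b \<in> carrier G" and nc: "a \<otimes> b \<noteq> b \<otimes> a"
  shows "a \<otimes> b \<otimes> inv a \<otimes> inv b \<noteq> \<one>"
proof
  assume c: "a \<otimes> b \<otimes> inv a \<otimes> inv b = \<one>"
  have e1: "inv b \<otimes> (b \<otimes> a) = a" using a b by (simp add: m_assoc[symmetric])
  have e2: "inv a \<otimes> a = \<one>" using a by simp
  have "(a \<otimes> b \<otimes> inv a \<otimes> inv b) \<otimes> (b \<otimes> a) = a \<otimes> b"
    using a b by (simp add: m_assoc e1)
  with c have "b \<otimes> a = a \<otimes> b" using a b by simp
  with nc show False by simp
qed

lemma main_bound:
  assumes fin: "finite (carrier G)" and a: "a \<in> carrier G" and b: "b \<in> carrier G"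
    and nc: "a \<otimes> b \<noteq> b \<otimes> a"
  shows "\<exists>L>0. \<forall>n. real (n div L) - 2 \<le> N1_ideal G {\<one>} n"
proof -
  define c where "c = a \<otimes> b \<otimes> inv a \<otimes> inv b"
  have c: "c \<in> carrier G" using a b by (simp add: c_def)
  define m where "m = ord c"
  have m1: "m \<ge> 1" unfolding m_def by (rule ord_ge_1[OF fin c])
  have "m \<noteq> 1" unfolding m_def using ord_eq_1[OF c] comm_ne[OF a b nc] by (simp add: c_def)
  with m1 have m2: "m \<ge> 2" by simp
  define L where "L = 2 * m * m"
  have L: "L > 0" using m2 by (simp add: L_def)
  have "real (n div L) - 2 \<le> N1_ideal G {\<one>} n" for n
  proof (cases "n div L")
    case 0
    have "0 \<le> N1_ideal G {\<one>} n" unfolding N1_ideal_def N1_def by (rule log_nonneg)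
    moreover have "real (n div L) - 2 \<le> 0" using 0 by simp
    ultimately show ?thesis by linarith
  next
    case (Suc k')
    define k where "k = n div L"
    define r where "r = n mod L"
    have nk: "n = L * k + r" by (simp add: k_def r_def)
    define enA where "enA xs = concat (map (blk G a) (encA m xs)) @ replicate r \<one>" for xs
    define enB where "enB ys = concat (map (blk G b) (encB m ys)) @ replicate r \<one>" for ys
    define f where "f = (\<lambda>xs ys. interleaved_prod G xs ys \<in> {\<one>})"
    have inA: "enA x \<in> inputs G n" if "x \<in> Vs m k" for x
      using that a set_blks[OF a, of "encA m x"] by (auto simp: enA_def inputs_def length_blks length_encA Vs_def nk L_def set_blk)
    have inB: "enB y \<in> inputs G n" if "y \<in> Vs m k" for y
      using that b set_blks[OF b, of "encB m y"] by (auto simp: enB_def inputs_def length_blks length_encB Vs_def nk L_def set_blk)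
    have hf: "f (enA x) (enB y) \<longleftrightarrow> m dvd ipn x y" if x: "x \<in> Vs m k" and y: "y \<in> Vs m k" for x y
    proof -
      have len: "length (encA m x) = length (encB m y)" using x y by (simp add: length_encA length_encB Vs_def)
      have "interleaved_prod G (enA x) (enB y) =
         interleaved_prod G (concat (map (blk G a) (encA m x))) (concat (map (blk G b) (encB m y))) \<otimes>
         interleaved_prod G (replicate r \<one>) (replicate r \<one>)"
        unfolding enA_def enB_def
        by (rule ip_append, simp add: length_blks len, rule set_blks[OF a], rule set_blks[OF b], auto)
      also have "\<dots> = c [^] cnt (encA m x) (encB m y)"
        using a b len by (simp add: ip_blks ip_ones c_def)
      also have "cnt (encA m x) (encB m y) = ipn x y"
        using x y by (intro cnt_enc) (auto simp: Vs_def)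
      finally show ?thesis using pow_eq_id[OF c] by (simp add: f_def m_def)
    qed
    have mp: "m > 0" using m2 by simp
    have "card {p \<in> Vs m k \<times> Vs m k. m dvd ipn (fst p) (snd p)} \<le> C1 (inputs G n) (inputs G n) f * m ^ k"
      by (rule cover_lb[OF inputs_finite[OF fin] inputs_finite[OF fin] mp inA inB hf])
    moreover have "m ^ (2 * k') \<le> card {p \<in> Vs m k \<times> Vs m k. m dvd ipn (fst p) (snd p)}"
      using count_bound[of m k'] m2 Suc by (simp add: k_def)
    ultimately have "m ^ (2 * k') \<le> C1 (inputs G n) (inputs G n) f * m ^ Suc k'"
      using Suc by (simp add: k_def)
    from log_bound[OF m2 this]
    have "real k' - 1 \<le> N1_ideal G {\<one>} n" by (simp add: N1_ideal_def N1_def f_def)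
    thus ?thesis using Suc by simp
  qed
  with L show ?thesis by blast
qed

end



lemma div_real_bound: "L > 0 \<Longrightarrow> real n / real L - 1 \<le> real (n div L)"
proof -
  assume L: "L > (0::nat)"
  have "n < L * (n div L + 1)" using L
    by (metis add.commute div_mult_mod_eq mod_less_divisor nat_add_left_cancel_less distrib_left mult.commute mult_1_right)
  hence "real n < real L * (real (n div L) + 1)"
    by (metis of_nat_1 of_nat_add of_nat_less_iff of_nat_mult)
  thus ?thesis using L by (simp add: field_simps)
qed

theorem mainTheorem11:
  fixes G :: "('a, 'b) monoid_scheme" and lq :: "'a \<Rightarrow> 'a \<Rightarrow> bool"
  assumes "group G" and "finite (carrier G)"
    and "\<exists>x\<in>carrier G. \<exists>y\<in>carrier G. x \<otimes>\<^bsub>G\<^esub> y \<noteq> y \<otimes>\<^bsub>G\<^esub> x"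
    and "stable_order G lq"
  shows "N1_monoid G lq \<in> \<Omega>(\<lambda>n. real n)"
proof -
  interpret group G by fact
  obtain a b where ab: "a \<in> carrier G" "b \<in> carrier G" "a \<otimes>\<^bsub>G\<^esub> b \<noteq> b \<otimes>\<^bsub>G\<^esub> a" using assms(3) by blast
  obtain L where L: "L > 0" and hL: "\<And>n. real (n div L) - 2 \<le> N1_ideal G {\<one>\<^bsub>G\<^esub>} n"
    using main_bound[OF assms(2) ab] by blast
  have ideal: "order_ideal G lq {\<one>\<^bsub>G\<^esub>}"
    unfolding order_ideal_def using stable_trivial[OF assms(2) assms(4)] by auto
  have mon: "N1_ideal G {\<one>\<^bsub>G\<^esub>} n \<le> N1_monoid G lq n" for n
    unfolding N1_monoid_def
  proof (rule Max_ge)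
    show "finite {N1_ideal G I n |I. order_ideal G lq I}"
      by (rule finite_subset[of _ "(\<lambda>I. N1_ideal G I n) ` Pow (carrier G)"])
         (auto simp: order_ideal_def assms(2))
    show "N1_ideal G {\<one>\<^bsub>G\<^esub>} n \<in> {N1_ideal G I n |I. order_ideal G lq I}" using ideal by blast
  qed
  show ?thesis
  proof (rule landau_omega.bigI[of "1 / (2 * real L)"])
    show "0 < 1 / (2 * real L)" using L by simp
    show "\<forall>\<^sub>F n in at_top. 1 / (2 * real L) * norm (real n) \<le> norm (N1_monoid G lq n)"
      unfolding eventually_at_top_linorder
    proof (intro exI allI impI)
      fix n :: nat assume n: "n \<ge> 6 * L"
      have Lr: "real L > 0" using L by simp
      have "real n \<ge> 6 * real L" using n by (metis of_nat_le_iff of_nat_mult of_nat_numeral)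
      hence "real n / real L \<ge> 6" using Lr by (simp add: field_simps)
      have "1 / (2 * real L) * real n = (real n / real L) / 2" by simp
      also have "\<dots> \<le> real n / real L - 3" using \<open>real n / real L \<ge> 6\<close> by simp
      also have "\<dots> \<le> real (n div L) - 2" using div_real_bound[OF L, of n] by simp
      also have "\<dots> \<le> N1_monoid G lq n" using hL[of n] mon[of n] by simp
      finally show "1 / (2 * real L) * norm (real n) \<le> norm (N1_monoid G lq n)" by simp
    qed
  qed
qed

end
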